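(* Let $A$ be an $n\times m$ complex matrix of rank $n$ with $n\le m$, let $b\in\mathbb C^n$, and let $X=\{x\in\mathbb C^m:Ax=b\}$. Then $\Sigma_X=\Sigma_X^\infty$. These sets are nonempty if and only if $\det(AA^\top)=0$, and in that case they equal the affine linear space $\{u\in\mathbb C^m:Au-b\in\mathrm{Im}(AA^\top)\}$, which has dimension $m-n+\mathrm{rank}(AA^\top)$.
   Context: For $x,y\in\mathbb C^m$, $x\cdot y=\sum x_iy_i$ (complex bilinear). For an irreducible variety $X\subseteq\mathbb C^m$ and $x\in X_{\mathrm{reg}}$, $N_xX$ is the span of gradients at $x$ of generators of the ideal of $X$ (for $X=\{Ax=b\}$ this is the row space of $A$, i.e. $\mathrm{Im}A^\top$). The ED correspondence $\mathcal E_X$ is the Zariski closure of $\{(x,u):x\in X_{\mathrm{reg}},\ u-x\in N_xX\}$ and $\mathcal E_X(u)=\{x:(x,u)\in\mathcal E_X\}$. The infinite ED discriminant is $\Sigma_X^\infty=\{u:\dim\mathcal E_X(u)\ge1\}$. The (affine) ED discriminant $\Sigma_X$ is the set of $u$ such that either $\mathcal E_X(u)$ has an isolated point $x$ of multiplicity at least $2$ (as a solution in $x$ of the equations of $\mathcal E_X$ with $u$ fixed), or $\mathcal E_X(u)$ is infinite. *)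

theory Defs
  imports "HOL-Analysis.Analysis" "HOL-Library.Extended_Nat"
begin

text \<open>Polynomial functions on an ambient space, generated (as a ring, over the
complex constants) by a given set of coordinate functions.\<close>
inductive_set poly_in :: "('a \<Rightarrow> complex) set \<Rightarrow> ('a \<Rightarrow> complex) set"
  for C :: "('a \<Rightarrow> complex) set" where
  const: "(\<lambda>_. c) \<in> poly_in C"
| coord: "f \<in> C \<Longrightarrow> f \<in> poly_in C"
| add: "f \<in> poly_in C \<Longrightarrow> g \<in> poly_in C \<Longrightarrow> (\<lambda>x. f x + g x) \<in> poly_in C"
| mult: "f \<in> poly_in C \<Longrightarrow> g \<in> poly_in C \<Longrightarrow> (\<lambda>x. f x * g x) \<in> poly_in C"

definition coords :: "(complex^'m \<Rightarrow> complex) set" where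
  "coords = {(\<lambda>x. x $ i) | i. True}"

definition coords2 :: "((complex^'m) \<times> (complex^'m) \<Rightarrow> complex) set" where
  "coords2 = {(\<lambda>p. fst p $ i) | i. True} \<union> {(\<lambda>p. snd p $ i) | i. True}"

definition zariski_closed :: "('a \<Rightarrow> complex) set \<Rightarrow> 'a set \<Rightarrow> bool" where
  "zariski_closed C S \<longleftrightarrow> (\<exists>P \<subseteq> poly_in C. S = {x. \<forall>p\<in>P. p x = 0})"

definition zariski_closure :: "('a \<Rightarrow> complex) set \<Rightarrow> 'a set \<Rightarrow> 'a set" where
  "zariski_closure C S = \<Inter> {T. zariski_closed C T \<and> S \<subseteq> T}"

definition zariski_irreducible :: "('a \<Rightarrow> complex) set \<Rightarrow> 'a set \<Rightarrow> bool" where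
  "zariski_irreducible C Z \<longleftrightarrow> Z \<noteq> {} \<and>
     (\<forall>Z1 Z2. zariski_closed C Z1 \<longrightarrow> zariski_closed C Z2 \<longrightarrow> Z = (Z \<inter> Z1) \<union> (Z \<inter> Z2)
        \<longrightarrow> Z \<subseteq> Z1 \<or> Z \<subseteq> Z2)"

text \<open>Dimension (topological Krull dimension in the Zariski topology) at least k:
  there is a chain Z_0 < Z_1 < ... < Z_k of irreducible Zariski-closed subsets of S.\<close>
definition zdim_ge :: "('a \<Rightarrow> complex) set \<Rightarrow> 'a set \<Rightarrow> nat \<Rightarrow> bool" where
  "zdim_ge C S k \<longleftrightarrow> (\<exists>Z :: nat \<Rightarrow> 'a set.
      (\<forall>i\<le>k. zariski_closed C (Z i) \<and> zariski_irreducible C (Z i) \<and> Z i \<subseteq> S) \<and>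
      (\<forall>i<k. Z i \<subset> Z (Suc i)))"

inductive_set ideal_gen :: "('a \<Rightarrow> complex) set \<Rightarrow> ('a \<Rightarrow> complex) set \<Rightarrow> ('a \<Rightarrow> complex) set"
  for C G where
  zero: "(\<lambda>_. 0) \<in> ideal_gen C G"
| gen: "g \<in> G \<Longrightarrow> h \<in> poly_in C \<Longrightarrow> (\<lambda>x. h x * g x) \<in> ideal_gen C G"
| add: "f \<in> ideal_gen C G \<Longrightarrow> g \<in> ideal_gen C G \<Longrightarrow> (\<lambda>x. f x + g x) \<in> ideal_gen C G"

definition max_ideal :: "('a \<Rightarrow> complex) set \<Rightarrow> 'a \<Rightarrow> ('a \<Rightarrow> complex) set" where
  "max_ideal C x = {f \<in> poly_in C. f x = 0}"

fun max_ideal_pow :: "('a \<Rightarrow> complex) set \<Rightarrow> 'a \<Rightarrow> nat \<Rightarrow> ('a \<Rightarrow> complex) set" where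
  "max_ideal_pow C x 0 = poly_in C"
| "max_ideal_pow C x (Suc k) =
     ideal_gen C {(\<lambda>y. f y * g y) | f g. f \<in> max_ideal C x \<and> g \<in> max_ideal_pow C x k}"

text \<open>Dimension of the complex vector space (poly_in C) / J.\<close>
definition quot_dim :: "('a \<Rightarrow> complex) set \<Rightarrow> ('a \<Rightarrow> complex) set \<Rightarrow> enat" where
  "quot_dim C J = Sup ((\<lambda>F. enat (card F)) `
     {F. finite F \<and> F \<subseteq> poly_in C \<and>
         (\<forall>c. (\<lambda>y. \<Sum>f\<in>F. c f * f y) \<in> J \<longrightarrow> (\<forall>f\<in>F. c f = 0))})"

text \<open>Multiplicity of a point x as a solution of the ideal I: the length of the
local ring O_x / I O_x, computed as the supremum over k of dim C[x]/(I + m_x^k).\<close>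
definition local_mult :: "('a \<Rightarrow> complex) set \<Rightarrow> ('a \<Rightarrow> complex) set \<Rightarrow> 'a \<Rightarrow> enat" where
  "local_mult C I x = (SUP k. quot_dim C {(\<lambda>y. f y + g y) | f g. f \<in> I \<and> g \<in> max_ideal_pow C x k})"

text \<open>For the affine linear space X = {x. A x = b} (A of full row rank), every point is
regular and N_x X = Im (A^T).\<close>
definition lin_var :: "complex^'m^'n \<Rightarrow> complex^'n \<Rightarrow> (complex^'m) set" where
  "lin_var A b = {x. A *v x = b}"

definition ED_corr :: "complex^'m^'n \<Rightarrow> complex^'n \<Rightarrow> ((complex^'m) \<times> (complex^'m)) set" where
  "ED_corr A b = zariski_closure coords2
     {(x, u). x \<in> lin_var A b \<and> u - x \<in> range (\<lambda>y. transpose A *v y)}"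

definition ED_fiber :: "complex^'m^'n \<Rightarrow> complex^'n \<Rightarrow> complex^'m \<Rightarrow> (complex^'m) set" where
  "ED_fiber A b u = {x. (x, u) \<in> ED_corr A b}"

definition ED_ideal_at :: "complex^'m^'n \<Rightarrow> complex^'n \<Rightarrow> complex^'m \<Rightarrow> (complex^'m \<Rightarrow> complex) set" where
  "ED_ideal_at A b u = {(\<lambda>x. p (x, u)) | p. p \<in> poly_in coords2 \<and> (\<forall>z\<in>ED_corr A b. p z = 0)}"

definition ED_disc_inf :: "complex^'m^'n \<Rightarrow> complex^'n \<Rightarrow> (complex^'m) set" where
  "ED_disc_inf A b = {u. zdim_ge coords (ED_fiber A b u) 1}"

definition ED_disc :: "complex^'m^'n \<Rightarrow> complex^'n \<Rightarrow> (complex^'m) set" where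
  "ED_disc A b = {u. (\<exists>x\<in>ED_fiber A b u. \<not> x islimpt ED_fiber A b u \<and>
                        local_mult coords (ED_ideal_at A b u) x \<ge> 2)
                    \<or> infinite (ED_fiber A b u)}"

end

theory Submission
  imports Defs
begin



lemma rank_nullity_sub:
  fixes f :: "'a::field^'n \<Rightarrow> 'a^'k"
  assumes lf: "Vector_Spaces.linear (*s) (*s) f" and S: "vec.subspace S"
  shows "vec.dim (f ` S) + vec.dim {x\<in>S. f x = 0} = vec.dim S"
proof -
  interpret lf: Vector_Spaces.linear "(*s)" "(*s)" f by fact
  let ?K = "{x\<in>S. f x = 0}"
  have sK: "vec.subspace ?K"
    using S unfolding vec.subspace_def by (auto simp: lf.add lf.scale lf.zero)
  obtain BK where BK: "BK \<subseteq> ?K" "vec.independent BK" "?K \<subseteq> vec.span BK" "card BK = vec.dim ?K"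
    using vec.basis_exists by blast
  obtain B where B: "BK \<subseteq> B" "B \<subseteq> S" "vec.independent B" "S \<subseteq> vec.span B"
    using vec.maximal_independent_subset_extend[of BK S] BK S by auto
  have fB: "finite B" using B(3) vec.finiteI_independent by blast
  have cB: "card B = vec.dim S" using B vec.basis_card_eq_dim by blast
  define C where "C = B - BK"
  have iC: "vec.independent C" using B(3) vec.independent_mono C_def by blast
  have spC: "vec.span C \<subseteq> S" using B(2) S C_def vec.span_minimal by blast
  have spK: "vec.span BK \<subseteq> ?K" using BK(1) sK vec.span_minimal by blast
  have dC: "vec.dim (vec.span C) = card C" using iC vec.dim_span_eq_card_independent by blast
  have dK: "vec.dim (vec.span BK) = card BK" using BK(2) vec.dim_span_eq_card_independent by blast
  have cBCK: "card B = card C + card BK"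
    unfolding C_def using fB B(1) by (metis card_Diff_subset card_mono finite_subset le_add_diff_inverse2)
  have un: "{x + y |x y. x \<in> vec.span C \<and> y \<in> vec.span BK} = vec.span B"
    using B(1) unfolding C_def vec.span_Un[symmetric] by (metis Diff_partition sup_commute)
  have "vec.dim (vec.span B) = card B" using B(3) vec.dim_span_eq_card_independent by blast
  with vec.dim_sums_Int[of "vec.span C" "vec.span BK"] un dC dK cBCK
  have "vec.dim (vec.span C \<inter> vec.span BK) = 0" by simp
  then have int0: "vec.span C \<inter> vec.span BK \<subseteq> {0}" by simp
  have inj: "inj_on f (vec.span C)"
  proof (rule inj_onI)
    fix x y assume xy: "x \<in> vec.span C" "y \<in> vec.span C" "f x = f y"
    then have "x - y \<in> vec.span C" by (simp add: vec.span_diff)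
    moreover have "x - y \<in> ?K" using xy spC vec.subspace_diff[OF S, of x y] by (auto simp: lf.diff)
    ultimately show "x = y" using int0 BK(3) by auto
  qed
  have img: "f ` S = f ` vec.span C"
  proof
    show "f ` vec.span C \<subseteq> f ` S" using spC by auto
    show "f ` S \<subseteq> f ` vec.span C"
    proof
      fix z assume "z \<in> f ` S"
      then obtain x where x: "x \<in> S" "z = f x" by auto
      then have "x \<in> vec.span (C \<union> BK)" using B(1,4) C_def by (metis Diff_partition sup_commute subsetD)
      then obtain c k where ck: "x = c + k" "c \<in> vec.span C" "k \<in> vec.span BK"
        unfolding vec.span_Un by auto
      have "f k = 0" using ck(3) spK by auto
      then have "z = f c" using x ck by (simp add: lf.add)
      then show "z \<in> f ` vec.span C" using ck by auto
    qed
  qed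
  have "vec.dim (f ` S) = card C"
  proof -
    have "vec.dim (f ` C) = card C" using vec.dim_image_eq[OF lf, of "C"] inj dC by simp
    moreover have "f ` vec.span C = vec.span (f ` C)" by (simp add: lf.span_image)
    ultimately show ?thesis using img by simp
  qed
  moreover have "vec.dim ?K = card BK" using BK by simp
  ultimately show ?thesis using cBCK cB by simp
qed

lemma rank_nullity_UNIV:
  fixes N :: "'a::field^'n^'k"
  shows "vec.dim (range ((*v) N)) + vec.dim {x. N *v x = 0} = CARD('n)"
  using rank_nullity_sub[of "(*v) N" UNIV] by (simp add: card_cart_basis)


lemma dot_swap:
  fixes N :: "'a::comm_semiring_1^'m^'k"
  shows "(\<Sum>i\<in>UNIV. w$i * (N *v y)$i) = (\<Sum>j\<in>UNIV. (transpose N *v w)$j * y$j)"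
proof -
  have "(\<Sum>i\<in>UNIV. w$i * (N *v y)$i) = (\<Sum>i\<in>UNIV. \<Sum>j\<in>UNIV. w$i * N$i$j * y$j)"
    unfolding matrix_vector_mult_def by (simp add: sum_distrib_left mult.assoc)
  also have "\<dots> = (\<Sum>j\<in>UNIV. \<Sum>i\<in>UNIV. w$i * N$i$j * y$j)"
    by (rule sum.swap)
  also have "\<dots> = (\<Sum>j\<in>UNIV. (transpose N *v w)$j * y$j)"
    unfolding matrix_vector_mult_def transpose_def by (simp add: sum_distrib_left mult.commute mult.left_commute)
  finally show ?thesis .
qed

lemma range_cols: 
  fixes N :: "'a::field^'m^'k"
  shows "range ((*v) N) = vec.span (columns N)"
proof
  show "range ((*v) N) \<subseteq> vec.span (columns N)" using matrix_vector_mult_in_columnspace_gen by blast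
  have "columns N \<subseteq> range ((*v) N)"
  proof
    fix c assume "c \<in> columns N"
    then obtain i where "c = column i N" unfolding columns_def by auto
    then have "c = N *v axis i 1"
      by (simp add: column_def matrix_vector_mult_def vec_eq_iff axis_def if_distrib cong: if_cong)
    then show "c \<in> range ((*v) N)" by auto
  qed
  then show "vec.span (columns N) \<subseteq> range ((*v) N)"
    by (metis vec.span_minimal vec.subspace_UNIV vec.subspace_image)
qed

lemma rank_range_transpose:
  fixes N :: "'a::field^'m^'k"
  shows "rank N = vec.dim (range ((*v) (transpose N)))"
  unfolding row_rank_def_gen range_cols
  by (metis columns_transpose vec.dim_span)


lemma sum_axis: "(\<Sum>j\<in>UNIV. (c::'a::comm_semiring_1^'n)$j * (axis k 1 :: 'a^'n)$j) = c$k"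
  by (simp add: axis_def mult.commute[of _ "if _ then _ else _"] if_distrib[of "\<lambda>x. x * _"] cong: if_cong)
lemma duality:
  fixes N :: "'a::field^'m^'k" and v :: "'a^'k"
  assumes h: "\<And>w. transpose N *v w = 0 \<Longrightarrow> (\<Sum>i\<in>UNIV. w$i * v$i) = 0"
  shows "v \<in> range ((*v) N)"
proof (rule ccontr)
  assume nv: "v \<notin> range ((*v) N)"
  let ?R = "range ((*v) N)"
  have sR: "vec.subspace ?R" by (rule vec.subspace_image[OF vec.subspace_UNIV])
  obtain B0 where B0: "B0 \<subseteq> ?R" "vec.independent B0" "?R \<subseteq> vec.span B0" "card B0 = vec.dim ?R"
    by (rule vec.basis_exists)
  have "vec.span B0 \<subseteq> ?R" using B0(1) sR vec.span_minimal by blast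
  then have "v \<notin> vec.span B0" using nv by auto
  then have iB: "vec.independent (insert v B0)" using B0(2) vec.independent_insertI by blast
  define g :: "'a^'k \<Rightarrow> 'a^'k" where "g = (\<lambda>x. if x = v then vec 1 else 0)"
  define F where "F = vec.construct (insert v B0) g"
  have lF: "Vector_Spaces.linear (*s) (*s) F" unfolding F_def using vec.linear_construct[OF iB] .
  interpret lF: Vector_Spaces.linear "(*s)" "(*s)" F by fact
  have "F v = g v" unfolding F_def by (rule vec.construct_basis[OF iB]) simp
  then have Fv: "F v = vec 1" by (simp add: g_def)
  have FB0: "F b = 0" if "b \<in> B0" for b
  proof -
    have "F b = g b" unfolding F_def by (rule vec.construct_basis[OF iB]) (simp add: that)
    moreover have "b \<noteq> v" using that nv B0(1) by blast
    ultimately show ?thesis by (simp add: g_def)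
  qed
  have FR: "F (N *v y) = 0" for y
    using lF.eq_0_on_span[of B0 "N *v y"] FB0 B0(3) by blast
  define i0 :: 'k where "i0 = undefined"
  define w :: "'a^'k" where "w = (\<chi> j. F (axis j 1) $ i0)"
  have Fw: "(F x)$i0 = (\<Sum>j\<in>UNIV. w$j * x$j)" for x
    unfolding w_def using linear_componentwise[OF lF, of x i0] by (simp add: mult.commute)
  have zz: "(\<Sum>j\<in>UNIV. (transpose N *v w)$j * y$j) = 0" for y
    using FR[of y] Fw[of "N *v y"] dot_swap[of w N y] by simp
  then have "(transpose N *v w)$j = 0" for j
    using zz[of "axis j 1"] sum_axis[of "transpose N *v w" j] by simp
  then have "transpose N *v w = 0" by (simp add: vec_eq_iff)
  then have "(\<Sum>i\<in>UNIV. w$i * v$i) = 0" by (rule h)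
  then show False using Fw[of v] Fv by simp
qed



lemma poly_in_sum:
  assumes "finite I" "\<And>i. i \<in> I \<Longrightarrow> f i \<in> poly_in C"
  shows "(\<lambda>x. \<Sum>i\<in>I. f i x) \<in> poly_in C"
  using assms
proof (induction I rule: finite_induct)
  case empty
  then show ?case using poly_in.const[of 0 C] by simp
next
  case (insert a I)
  have "(\<lambda>x. f a x + (\<Sum>i\<in>I. f i x)) \<in> poly_in C"
    using insert by (intro poly_in.add) auto
  then show ?case using insert by simp
qed

lemma poly_in_diff:
  assumes "f \<in> poly_in C" "g \<in> poly_in C"
  shows "(\<lambda>x. f x - g x) \<in> poly_in C"
proof -
  have "(\<lambda>x. f x + (-1) * g x) \<in> poly_in C"
    using assms by (intro poly_in.add poly_in.mult poly_in.const)
  then show ?thesis by simp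
qed

lemma poly_in_subst:
  assumes "f \<in> poly_in C" "\<And>c. c \<in> C \<Longrightarrow> (\<lambda>y. c (\<phi> y)) \<in> poly_in C'"
  shows "(\<lambda>y. f (\<phi> y)) \<in> poly_in C'"
  using assms(1)
proof (induction rule: poly_in.induct)
  case (const c)
  then show ?case by (rule poly_in.const)
next
  case (coord f)
  then show ?case using assms(2) by blast
next
  case (add f1 f2)
  from add.IH show ?case by (rule poly_in.add)
next
  case (mult f1 f2)
  from mult.IH show ?case by (rule poly_in.mult)
qed

lemma coord_in: "(\<lambda>x. x$i) \<in> poly_in coords"
  by (rule poly_in.coord) (auto simp: coords_def)

lemma fst_in: "(\<lambda>z. fst z $ i) \<in> poly_in coords2"
  by (rule poly_in.coord) (auto simp: coords2_def)

lemma snd_in: "(\<lambda>z. snd z $ i) \<in> poly_in coords2"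
  by (rule poly_in.coord) (auto simp: coords2_def)

lemma comp_fst_in:
  assumes "f \<in> poly_in coords"
  shows "(\<lambda>z. f (fst z)) \<in> poly_in coords2"
  by (rule poly_in_subst[OF assms]) (auto simp: coords_def fst_in)

lemma lin_snd_in:
  fixes E :: "complex^'m^'k"
  shows "(\<lambda>z. (E *v snd z)$i + e) \<in> poly_in coords2"
proof -
  have "(\<lambda>z. (\<Sum>j\<in>UNIV. (\<lambda>j z. E$i$j * snd z $ j) j z) + e) \<in> poly_in coords2"
    by (intro poly_in.add poly_in_sum poly_in.mult poly_in.const snd_in) auto
  then show ?thesis by (simp add: matrix_vector_mult_def)
qed

lemma comp_aff_in:
  fixes E :: "complex^'m^'m"
  assumes "f \<in> poly_in coords"
  shows "(\<lambda>z. f (E *v snd z + e)) \<in> poly_in coords2"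
proof (rule poly_in_subst[OF assms])
  fix c :: "complex^'m \<Rightarrow> complex" assume "c \<in> coords"
  then obtain i where "c = (\<lambda>x. x$i)" by (auto simp: coords_def)
  then show "(\<lambda>y. c (E *v snd y + e)) \<in> poly_in coords2"
    using lin_snd_in[of E i "e$i"] by simp
qed

lemma closure_sub: "zariski_closed C T \<Longrightarrow> S \<subseteq> T \<Longrightarrow> zariski_closure C S \<subseteq> T"
  unfolding zariski_closure_def by blast

lemma sub_closure: "S \<subseteq> zariski_closure C S"
  unfolding zariski_closure_def by blast

lemma closed_Collect: "P \<subseteq> poly_in C \<Longrightarrow> zariski_closed C {x. \<forall>p\<in>P. p x = 0}"
  unfolding zariski_closed_def by blast

lemma closure_eq:
  "zariski_closure C S = {x. \<forall>p\<in>{p\<in>poly_in C. \<forall>y\<in>S. p y = 0}. p x = 0}"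
proof (rule antisym)
  let ?Q = "{p\<in>poly_in C. \<forall>y\<in>S. p y = 0}"
  have "zariski_closed C {x. \<forall>p\<in>?Q. p x = 0}" by (rule closed_Collect) blast
  moreover have "S \<subseteq> {x. \<forall>p\<in>?Q. p x = 0}" by blast
  ultimately show "zariski_closure C S \<subseteq> {x. \<forall>p\<in>?Q. p x = 0}" by (rule closure_sub)
  show "{x. \<forall>p\<in>?Q. p x = 0} \<subseteq> zariski_closure C S"
    unfolding zariski_closure_def
  proof (intro subsetI InterI)
    fix x T assume x: "x \<in> {x. \<forall>p\<in>?Q. p x = 0}" and T: "T \<in> {T. zariski_closed C T \<and> S \<subseteq> T}"
    then have Tc: "zariski_closed C T" and ST: "S \<subseteq> T" by auto
    obtain P where P: "P \<subseteq> poly_in C" and TP: "T = {x. \<forall>p\<in>P. p x = 0}"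
      using Tc unfolding zariski_closed_def by blast
    have "p x = 0" if p: "p \<in> P" for p
    proof -
      have "\<forall>y\<in>S. p y = 0"
      proof
        fix y assume "y \<in> S"
        then have "y \<in> T" using ST by blast
        then show "p y = 0" using p unfolding TP by blast
      qed
      then have "p \<in> ?Q" using p P by blast
      then show ?thesis using x by blast
    qed
    then show "x \<in> T" unfolding TP by blast
  qed
qed

lemma closed_closure: "zariski_closed C (zariski_closure C S)"
  unfolding closure_eq by (rule closed_Collect) blast

lemma fiber_closed:
  assumes "zariski_closed coords2 Z"
  shows "zariski_closed coords {x. (x, u) \<in> Z}"
proof -
  obtain P where P: "P \<subseteq> poly_in coords2" and ZP: "Z = {x. \<forall>p\<in>P. p x = 0}"
    using assms unfolding zariski_closed_def by blast
  let ?P = "(\<lambda>p x. p (x, u)) ` P"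
  have cc: "(\<lambda>y. c (y, u)) \<in> poly_in coords" if "c \<in> coords2" for c :: "(complex^'a) \<times> (complex^'a) \<Rightarrow> complex"
  proof -
    from that obtain i where "c = (\<lambda>p. fst p $ i) \<or> c = (\<lambda>p. snd p $ i)" unfolding coords2_def by blast
    then show ?thesis
    proof
      assume "c = (\<lambda>p. fst p $ i)" then show ?thesis using coord_in[of i] by simp
    next
      assume "c = (\<lambda>p. snd p $ i)" then show ?thesis using poly_in.const[of "u$i" coords] by simp
    qed
  qed
  have "?P \<subseteq> poly_in coords"
  proof
    fix q assume "q \<in> ?P"
    then obtain p where p: "p \<in> P" and qp: "q = (\<lambda>x. p (x, u))" by blast
    have "p \<in> poly_in coords2" using P p by blast
    then have "(\<lambda>x. p (x, u)) \<in> poly_in coords"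
      by (rule poly_in_subst[of p coords2 "\<lambda>x. (x, u)" coords, OF _ cc])
    then show "q \<in> poly_in coords" using qp by simp
  qed
  then have "zariski_closed coords {x. \<forall>q\<in>?P. q x = 0}" by (rule closed_Collect)
  moreover have "{x. (x, u) \<in> Z} = {x. \<forall>q\<in>?P. q x = 0}" unfolding ZP by auto
  ultimately show ?thesis by simp
qed

lemma line_poly:
  assumes "f \<in> poly_in coords"
  shows "\<exists>q. \<forall>t. f (x0 + t *s d) = poly q t"
  using assms
proof (induction rule: poly_in.induct)
  case (const c)
  then show ?case by (intro exI[of _ "[:c:]"]) simp
next
  case (coord f)
  then obtain i where "f = (\<lambda>x. x$i)" by (auto simp: coords_def)
  then show ?case by (intro exI[of _ "[:x0$i, d$i:]"]) (simp add: mult.commute)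
next
  case (add f g)
  then obtain q1 q2 where "\<forall>t. f (x0 + t *s d) = poly q1 t" "\<forall>t. g (x0 + t *s d) = poly q2 t" by blast
  then show ?case by (intro exI[of _ "q1 + q2"]) simp
next
  case (mult f g)
  then obtain q1 q2 where "\<forall>t. f (x0 + t *s d) = poly q1 t" "\<forall>t. g (x0 + t *s d) = poly q2 t" by blast
  then show ?case by (intro exI[of _ "q1 * q2"]) simp
qed

lemma line_in_closed:
  assumes Z: "zariski_closed coords Z" and nz: "\<exists>t. x0 + t *s d \<notin> Z"
  shows "finite {t. x0 + t *s d \<in> Z}"
proof -
  obtain P where P: "P \<subseteq> poly_in coords" "Z = {x. \<forall>p\<in>P. p x = 0}"
    using Z unfolding zariski_closed_def by blast
  obtain t0 where "x0 + t0 *s d \<notin> Z" using nz by blast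
  then obtain p where p: "p \<in> P" "p (x0 + t0 *s d) \<noteq> 0" using P by blast
  obtain q where q: "\<forall>t. p (x0 + t *s d) = poly q t" using line_poly[of p x0 d] p P by blast
  have "q \<noteq> 0" using q p by auto
  then have "finite {t. poly q t = 0}" by (rule poly_roots_finite)
  moreover have "{t. x0 + t *s d \<in> Z} \<subseteq> {t. poly q t = 0}" using P p q by auto
  ultimately show ?thesis by (rule finite_subset[rotated])
qed

lemma line_irred:
  fixes x0 d :: "complex^'m"
  shows "zariski_irreducible coords (zariski_closure coords (range (\<lambda>t. x0 + t *s d)))"
proof -
  let ?L = "range (\<lambda>t. x0 + t *s d)"
  let ?Z = "zariski_closure coords ?L"
  have ne: "?Z \<noteq> {}" using sub_closure[of ?L coords] by blast
  have "?Z \<subseteq> Z1 \<or> ?Z \<subseteq> Z2"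
    if Z1: "zariski_closed coords Z1" and Z2: "zariski_closed coords Z2"
      and eq: "?Z = (?Z \<inter> Z1) \<union> (?Z \<inter> Z2)" for Z1 Z2
  proof (rule ccontr)
    assume "\<not> (?Z \<subseteq> Z1 \<or> ?Z \<subseteq> Z2)"
    then have n1: "\<not> ?L \<subseteq> Z1" and n2: "\<not> ?L \<subseteq> Z2"
      using closure_sub[OF Z1] closure_sub[OF Z2] by blast+
    have f1: "finite {t. x0 + t *s d \<in> Z1}" using line_in_closed[OF Z1] n1 by blast
    have f2: "finite {t. x0 + t *s d \<in> Z2}" using line_in_closed[OF Z2] n2 by blast
    have "?L \<subseteq> Z1 \<union> Z2" using eq sub_closure[of ?L coords] by blast
    then have "(UNIV :: complex set) = {t. x0 + t *s d \<in> Z1} \<union> {t. x0 + t *s d \<in> Z2}" by auto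
    then have "finite (UNIV :: complex set)" using f1 f2 by (metis finite_UnI)
    then show False using infinite_UNIV_char_0 by blast
  qed
  then show ?thesis unfolding zariski_irreducible_def using ne by blast
qed

lemma point_closed: "zariski_closed coords {x0 :: complex^'m}"
proof -
  let ?P = "{(\<lambda>x. x$i - x0$i) | i. True}"
  have "?P \<subseteq> poly_in coords"
  proof
    fix p assume "p \<in> ?P"
    then obtain i where "p = (\<lambda>x. x$i - x0$i)" by blast
    then show "p \<in> poly_in coords" using poly_in_diff[OF coord_in poly_in.const] by simp
  qed
  then have "zariski_closed coords {x. \<forall>q\<in>?P. q x = 0}" by (rule closed_Collect)
  moreover have "{x0} = {x. \<forall>p\<in>?P. p x = 0}"
  proof (intro set_eqI iffI)
    fix x assume h: "x \<in> {x. \<forall>p\<in>?P. p x = 0}"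
    have "x$i - x0$i = 0" for i
    proof -
      have mem: "(\<lambda>x. x$i - x0$i) \<in> ?P" by blast
      have hh: "\<forall>p\<in>?P. p x = 0" using h by (rule CollectD)
      have "(\<lambda>x. x$i - x0$i) x = 0" using hh mem by (rule bspec)
      then show ?thesis by simp
    qed
    then show "x \<in> {x0}" by (simp add: vec_eq_iff)
  qed auto
  ultimately show ?thesis by metis
qed

lemma point_irred: "zariski_irreducible C {x0}"
  unfolding zariski_irreducible_def
proof (intro conjI allI impI)
  fix Z1 Z2 assume "{x0} = {x0} \<inter> Z1 \<union> {x0} \<inter> Z2"
  then have "x0 \<in> Z1 \<or> x0 \<in> Z2" by (metis Int_iff Un_iff insertI1)
  then show "{x0} \<subseteq> Z1 \<or> {x0} \<subseteq> Z2" by simp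
qed simp



lemma zero_pow: "(\<lambda>_. 0) \<in> max_ideal_pow C x k"
  by (cases k) (auto intro: poly_in.const ideal_gen.zero)

lemma quot_le1:
  assumes J: "max_ideal C x \<subseteq> J"
  shows "quot_dim C J \<le> 1"
  unfolding quot_dim_def
proof (rule Sup_least)
  fix e assume "e \<in> (\<lambda>F. enat (card F)) ` {F. finite F \<and> F \<subseteq> poly_in C \<and>
         (\<forall>c. (\<lambda>y. \<Sum>f\<in>F. c f * f y) \<in> J \<longrightarrow> (\<forall>f\<in>F. c f = 0))}"
  then obtain F where e: "e = enat (card F)" and fin: "finite F" and FP: "F \<subseteq> poly_in C"
    and ind: "\<And>c. (\<lambda>y. \<Sum>f\<in>F. c f * f y) \<in> J \<Longrightarrow> (\<forall>f\<in>F. c f = 0)"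
    by blast
  have "card F \<le> 1"
  proof (rule ccontr)
    assume "\<not> card F \<le> 1"
    then have "\<not> (\<forall>a1\<in>F. \<forall>a2\<in>F. a1 = a2)" using card_le_Suc0_iff_eq[OF fin] by simp
    then obtain f g where fg: "f \<in> F" "g \<in> F" "f \<noteq> g" by blast
    have fP: "f \<in> poly_in C" and gP: "g \<in> poly_in C" using fg FP by auto
    show False
    proof (cases "f x = 0 \<and> g x = 0")
      case True
      define c where "c = (\<lambda>h. if h = f then (1::complex) else 0)"
      have "(\<Sum>h\<in>F. c h * h y) = (\<Sum>h\<in>F. if h = f then f y else 0)" for y
        by (rule sum.cong) (auto simp: c_def)
      also have "\<dots> y = f y" for y using fg(1) fin by simp
      finally have eq: "(\<lambda>y. \<Sum>h\<in>F. c h * h y) = f" by (intro ext) 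
      have "f \<in> max_ideal C x" using fP True unfolding max_ideal_def by simp
      then have "f \<in> J" using J by blast
      then have "(\<lambda>y. \<Sum>h\<in>F. c h * h y) \<in> J" using eq by simp
      then have "c f = 0" using ind fg(1) by blast
      then show False by (simp add: c_def)
    next
      case False
      define c where "c = (\<lambda>h. if h = f then g x else if h = g then - f x else 0)"
      have "(\<Sum>h\<in>F. c h * h y) = (\<Sum>h\<in>F. (if h = f then g x * f y else 0) + (if h = g then - f x * g y else 0))" for y
        by (rule sum.cong) (use fg(3) in \<open>auto simp: c_def\<close>)
      also have "\<dots> y = g x * f y - f x * g y" for y
        using fg fin by (simp add: sum.distrib)
      finally have eq: "(\<lambda>y. \<Sum>h\<in>F. c h * h y) = (\<lambda>y. g x * f y - f x * g y)" by (intro ext)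
      have "(\<lambda>y. g x * f y - f x * g y) \<in> poly_in C"
        by (intro poly_in_diff poly_in.mult poly_in.const fP gP)
      then have "(\<lambda>y. g x * f y - f x * g y) \<in> max_ideal C x" unfolding max_ideal_def by simp
      then have "(\<lambda>y. \<Sum>h\<in>F. c h * h y) \<in> J" using J eq by auto
      then have "c f = 0" "c g = 0" using ind fg(1,2) by blast+
      then show False using False fg(3) by (simp add: c_def)
    qed
  qed
  then show "e \<le> 1" using e by (simp add: one_enat_def)
qed

lemma lm_le1:
  assumes "max_ideal C x \<subseteq> I"
  shows "local_mult C I x \<le> 1"
  unfolding local_mult_def
proof (rule SUP_least)
  fix k
  have "max_ideal C x \<subseteq> {(\<lambda>y. f y + g y) | f g. f \<in> I \<and> g \<in> max_ideal_pow C x k}"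
  proof
    fix f assume f: "f \<in> max_ideal C x"
    have "f \<in> I" using f assms by blast
    then have "\<exists>f' g. f = (\<lambda>y. f' y + g y) \<and> f' \<in> I \<and> g \<in> max_ideal_pow C x k"
      using zero_pow[of C x k] by (intro exI[of _ f] exI[of _ "\<lambda>_. 0"]) simp
    then show "f \<in> {(\<lambda>y. f y + g y) | f g. f \<in> I \<and> g \<in> max_ideal_pow C x k}"
      by simp
  qed
  then show "quot_dim C {(\<lambda>y. f y + g y) | f g. f \<in> I \<and> g \<in> max_ideal_pow C x k} \<le> 1"
    by (rule quot_le1)
qed



declare transpose_matrix_vector[simp del]

definition Sset :: "complex^'m^'n \<Rightarrow> complex^'n \<Rightarrow> ((complex^'m) \<times> (complex^'m)) set" where
  "Sset A b = {(x, u). x \<in> lin_var A b \<and> u - x \<in> range (\<lambda>y. transpose A *v y)}"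

lemma ED_corr_eq: "ED_corr A b = zariski_closure coords2 (Sset A b)"
  unfolding ED_corr_def Sset_def by (rule refl)

lemma Sset_fiber:
  assumes "(x, u) \<in> Sset A b" shows "x \<in> ED_fiber A b u"
proof -
  have "(x, u) \<in> zariski_closure coords2 (Sset A b)" using sub_closure assms by (rule subsetD)
  then show ?thesis unfolding ED_fiber_def ED_corr_eq by simp
qed

lemma corr_sub: "zariski_closed coords2 T \<Longrightarrow> Sset A b \<subseteq> T \<Longrightarrow> ED_corr A b \<subseteq> T"
  unfolding ED_corr_eq by (rule closure_sub)

lemma fiber_zclosed: "zariski_closed coords (ED_fiber A b u)"
  unfolding ED_fiber_def ED_corr_eq by (rule fiber_closed[OF closed_closure])

lemma SsetD:
  assumes "(x, u) \<in> Sset A b"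
  obtains y where "A *v x = b" "u - x = transpose A *v y"
  using assms unfolding Sset_def lin_var_def by auto

lemma SsetI:
  assumes "A *v x = b" "u - x = transpose A *v y"
  shows "(x, u) \<in> Sset A b"
  using assms unfolding Sset_def lin_var_def by auto

lemma graph_closed:
  fixes E :: "complex^'m^'m"
  shows "zariski_closed coords2 {z. fst z = E *v snd z + e}"
proof -
  let ?P = "{(\<lambda>z. fst z $ i - ((E *v snd z)$i + e$i)) | i. True}"
  have "?P \<subseteq> poly_in coords2"
  proof
    fix p assume "p \<in> ?P"
    then obtain i where "p = (\<lambda>z. fst z $ i - ((E *v snd z)$i + e$i))" by blast
    then show "p \<in> poly_in coords2" using poly_in_diff[OF fst_in lin_snd_in] by simp
  qed
  then have "zariski_closed coords2 {z. \<forall>q\<in>?P. q z = 0}" by (rule closed_Collect)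
  moreover have "{z. fst z = E *v snd z + e} = {z. \<forall>p\<in>?P. p z = 0}"
  proof (intro set_eqI iffI)
    fix z assume h: "z \<in> {z. \<forall>p\<in>?P. p z = 0}"
    have "fst z $ i - ((E *v snd z)$i + e$i) = 0" for i
    proof -
      have mem: "(\<lambda>z. fst z $ i - ((E *v snd z)$i + e$i)) \<in> ?P" by blast
      have hh: "\<forall>p\<in>?P. p z = 0" using h by (rule CollectD)
      have "(\<lambda>z. fst z $ i - ((E *v snd z)$i + e$i)) z = 0" using hh mem by (rule bspec)
      then show ?thesis by simp
    qed
    then show "z \<in> {z. fst z = E *v snd z + e}" by (simp add: vec_eq_iff)
  qed auto
  ultimately show ?thesis by metis
qed

lemma case_nz:
  fixes A :: "complex^'m^'n" and b :: "complex^'n"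
  assumes dz: "det (A ** transpose A) \<noteq> 0"
  shows "ED_disc A b = {} \<and> ED_disc_inf A b = {}"
proof -
  define M where "M = A ** transpose A"
  have "invertible M" using dz invertible_det_nz M_def by blast
  then obtain Mi where MMi: "M ** Mi = mat 1" and MiM: "Mi ** M = mat 1"
    unfolding invertible_def by blast
  define x0 where "x0 u = u - transpose A *v (Mi *v (A *v u - b))" for u
  define E where "E = mat 1 - transpose A ** Mi ** A"
  define e where "e = transpose A *v (Mi *v b)"
  have x0E: "x0 u = E *v u + e" for u
  proof -
    have "transpose A *v (Mi *v (A *v u - b)) = (transpose A ** Mi ** A) *v u - e"
      unfolding e_def by (simp add: matrix_vector_mult_diff_distrib matrix_vector_mul_assoc matrix_mul_assoc)
    then show ?thesis unfolding x0_def E_def by (simp add: matrix_vector_mult_diff_rdistrib)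
  qed
  define T where "T = {z. fst z = E *v snd z + e}"
  have Tc: "zariski_closed coords2 T" unfolding T_def by (rule graph_closed)
  have S_x0: "x = x0 u" if xu: "(x, u) \<in> Sset A b" for x u
  proof -
    obtain y where y: "A *v x = b" "u - x = transpose A *v y" using xu by (rule SsetD)
    have "A *v u - b = A *v (u - x)" using y(1) by (simp add: matrix_vector_mult_diff_distrib)
    also have "\<dots> = M *v y" using y(2) by (simp add: M_def matrix_vector_mul_assoc)
    finally have "Mi *v (A *v u - b) = y" using MiM by (simp add: matrix_vector_mul_assoc)
    then show ?thesis unfolding x0_def using y(2) by (simp add: algebra_simps)
  qed
  have x0S: "(x0 u, u) \<in> Sset A b" for u
  proof (rule SsetI)
    have "A *v x0 u = A *v u - A *v (transpose A *v (Mi *v (A *v u - b)))"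
      unfolding x0_def by (simp add: matrix_vector_mult_diff_distrib)
    also have "\<dots> = A *v u - M *v (Mi *v (A *v u - b))"
      unfolding M_def by (simp add: matrix_vector_mul_assoc matrix_mul_assoc)
    also have "\<dots> = b"
    proof -
      have "M *v (Mi *v w) = w" for w by (simp add: matrix_vector_mul_assoc MMi)
      then show ?thesis by simp
    qed
    finally show "A *v x0 u = b" .
    show "u - x0 u = transpose A *v (Mi *v (A *v u - b))" unfolding x0_def by simp
  qed
  have ST: "Sset A b \<subseteq> T"
  proof
    fix z assume "z \<in> Sset A b"
    then obtain x u where z: "z = (x, u)" "(x, u) \<in> Sset A b" by (metis prod.exhaust)
    then show "z \<in> T" using S_x0[OF z(2)] x0E unfolding T_def by simp
  qed
  have corrT: "ED_corr A b \<subseteq> T" using corr_sub[OF Tc ST] .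
  have fib: "ED_fiber A b u = {x0 u}" for u
  proof
    show "ED_fiber A b u \<subseteq> {x0 u}"
    proof
      fix x assume "x \<in> ED_fiber A b u"
      then have "(x, u) \<in> T" using corrT unfolding ED_fiber_def by blast
      then show "x \<in> {x0 u}" unfolding T_def using x0E by simp
    qed
    show "{x0 u} \<subseteq> ED_fiber A b u" using Sset_fiber[OF x0S] by simp
  qed
  have maxI: "max_ideal coords (x0 u) \<subseteq> ED_ideal_at A b u" for u
  proof
    fix f assume f: "f \<in> max_ideal coords (x0 u)"
    then have fP: "f \<in> poly_in coords" and f0: "f (x0 u) = 0" unfolding max_ideal_def by auto
    define p where "p z = f (fst z) - f (E *v snd z + e)" for z
    have pP: "p \<in> poly_in coords2" unfolding p_def
      by (intro poly_in_diff comp_fst_in comp_aff_in fP)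
    have pv: "\<forall>z\<in>ED_corr A b. p z = 0"
    proof
      fix z assume "z \<in> ED_corr A b"
      then have "z \<in> T" using corrT by blast
      then show "p z = 0" unfolding T_def p_def by simp
    qed
    have "(\<lambda>x. p (x, u)) = f" unfolding p_def using f0 x0E[of u] by (simp add: fun_eq_iff)
    then have "\<exists>p. f = (\<lambda>x. p (x, u)) \<and> p \<in> poly_in coords2 \<and> (\<forall>z\<in>ED_corr A b. p z = 0)"
      using pP pv by (intro exI[of _ p]) simp
    then show "f \<in> ED_ideal_at A b u" unfolding ED_ideal_at_def by simp
  qed
  have "ED_disc A b = {}"
  proof -
    have "u \<notin> ED_disc A b" for u
    proof
      assume "u \<in> ED_disc A b"
      then have dj: "(\<exists>x\<in>ED_fiber A b u. local_mult coords (ED_ideal_at A b u) x \<ge> 2)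
          \<or> infinite (ED_fiber A b u)" unfolding ED_disc_def by blast
      have lt2: "local_mult coords (ED_ideal_at A b u) (x0 u) < 2"
      proof -
        have "local_mult coords (ED_ideal_at A b u) (x0 u) \<le> 1" using maxI by (rule lm_le1)
        moreover have "(1::enat) < 2" by (simp add: one_enat_def numeral_eq_enat)
        ultimately show ?thesis by (rule le_less_trans)
      qed
      from dj show False
      proof
        assume "\<exists>x\<in>ED_fiber A b u. local_mult coords (ED_ideal_at A b u) x \<ge> 2"
        then obtain x where "x \<in> ED_fiber A b u" "local_mult coords (ED_ideal_at A b u) x \<ge> 2" by blast
        moreover have "x = x0 u" using calculation(1) fib[of u] by simp
        ultimately show False using lt2 by (simp add: not_le[symmetric])
      next
        assume "infinite (ED_fiber A b u)" then show False using fib[of u] by simp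
      qed
    qed
    then show ?thesis by blast
  qed
  moreover have "ED_disc_inf A b = {}"
  proof -
    have "u \<notin> ED_disc_inf A b" for u
    proof
      assume "u \<in> ED_disc_inf A b"
      then obtain Z where Z: "\<forall>i\<le>1. zariski_closed coords (Z i) \<and> zariski_irreducible coords (Z i) \<and> Z i \<subseteq> ED_fiber A b u"
        and lt: "\<forall>i<1. Z i \<subset> Z (Suc i)"
        unfolding ED_disc_inf_def zdim_ge_def by blast
      have Z0: "zariski_irreducible coords (Z 0)" using Z[rule_format, of 0] by simp
      have Z1: "Z 1 \<subseteq> ED_fiber A b u" using Z[rule_format, of 1] by simp
      have ne: "Z 0 \<noteq> {}" using Z0 unfolding zariski_irreducible_def by simp
      have s1: "Z 1 \<subseteq> {x0 u}" using Z1 fib[of u] by simp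
      have ps: "Z 0 \<subset> Z 1" using lt by simp
      have e0: "Z 0 = {x0 u}" using ne ps s1 by (meson psubset_imp_subset subset_singleton_iff subset_trans)
      show False using ps s1 e0 by blast
    qed
    then show ?thesis by blast
  qed
  ultimately show ?thesis by blast
qed



lemma AT_inj:
  fixes A :: "complex^'m^'n"
  assumes rk: "rank A = CARD('n)" and y: "transpose A *v y = 0"
  shows "y = 0"
proof -
  have "vec.dim (range ((*v) (transpose A))) + vec.dim {x. transpose A *v x = 0} = CARD('n)"
    by (rule rank_nullity_UNIV)
  moreover have "vec.dim (range ((*v) (transpose A))) = CARD('n)"
    using rk rank_range_transpose[of A] by simp
  ultimately have "vec.dim {x. transpose A *v x = 0} = 0" by simp
  then have "{x. transpose A *v x = 0} \<subseteq> {0}" by simp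
  then show ?thesis using y by blast
qed

lemma A_surj:
  fixes A :: "complex^'m^'n"
  assumes rk: "rank A = CARD('n)"
  shows "\<exists>x. A *v x = z"
proof -
  have "z \<in> range ((*v) A)"
  proof (rule duality)
    fix w assume "transpose A *v w = 0"
    then have "w = 0" using AT_inj[OF rk] by blast
    then show "(\<Sum>i\<in>UNIV. w$i * z$i) = 0" by simp
  qed
  then show ?thesis by auto
qed

lemma ker_nontriv:
  fixes M :: "complex^'n^'n"
  assumes "det M = 0"
  shows "\<exists>y. y \<noteq> 0 \<and> M *v y = 0"
proof (rule ccontr)
  assume "\<not> ?thesis"
  then have "{x. M *v x = 0} \<subseteq> {0}" by auto
  then have "vec.dim {x. M *v x = 0} = 0" by simp
  moreover have "vec.dim (range ((*v) M)) + vec.dim {x. M *v x = 0} = CARD('n)"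
    by (rule rank_nullity_UNIV)
  ultimately have d0: "vec.dim (range ((*v) M)) = CARD('n)" by linarith
  then have d: "vec.dim (range ((*v) M)) = vec.dim (UNIV :: (complex^'n) set)"
    by (simp add: vec_dim_card card_cart_basis)
  have "range ((*v) M) = UNIV"
    by (rule vec.subspace_dim_equal) (use d in \<open>auto intro: vec.subspace_image[OF vec.subspace_UNIV]\<close>)
  then have "surj (\<lambda>x. M *v x)" by simp
  then obtain B where "M ** B = mat 1" using matrix_right_invertible_surjective by blast
  then have "det M * det B = 1" by (metis det_mul det_I)
  then show False using assms by simp
qed

lemma M_sym:
  fixes A :: "complex^'m^'n"
  shows "transpose (A ** transpose A) = A ** transpose A"
  by (simp add: matrix_transpose_mul)

lemma AT_scale: "transpose A *v (c *s y) = c *s (transpose A *v y)"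
  for A :: "complex^'m^'n"
  by (rule vector_scalar_commute)

lemma aff_dot_closed:
  fixes A :: "complex^'m^'n" and w b :: "complex^'n"
  shows "zariski_closed coords2 {z. (\<Sum>i\<in>UNIV. w$i * ((A *v snd z)$i + (- b$i))) = 0}"
proof -
  let ?p = "\<lambda>z. (\<Sum>i\<in>UNIV. w$i * ((A *v snd z)$i + (- b$i)))"
  have "?p \<in> poly_in coords2"
    by (intro poly_in_sum poly_in.mult poly_in.const lin_snd_in) auto
  then have "zariski_closed coords2 {z. \<forall>q\<in>{?p}. q z = 0}" by (intro closed_Collect) simp
  then show ?thesis by simp
qed

lemma case_z:
  fixes A :: "complex^'m^'n" and b :: "complex^'n"
  assumes rk: "rank A = CARD('n)" and dz: "det (A ** transpose A) = 0"
  shows "ED_disc A b = {u. A *v u - b \<in> range (\<lambda>y. (A ** transpose A) *v y)}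
    \<and> ED_disc_inf A b = {u. A *v u - b \<in> range (\<lambda>y. (A ** transpose A) *v y)}"
proof -
  define M where "M = A ** transpose A"
  define R where "R = {u. A *v u - b \<in> range (\<lambda>y. M *v y)}"
  obtain y0 where y0: "y0 \<noteq> 0" "M *v y0 = 0" using ker_nontriv dz M_def by blast
  define d where "d = transpose A *v y0"
  have dnz: "d \<noteq> 0" unfolding d_def using AT_inj[OF rk, of y0] y0(1) by blast
  have inR: "infinite (ED_fiber A b u) \<and> zdim_ge coords (ED_fiber A b u) 1" if uR: "u \<in> R" for u
  proof -
    obtain y1 where y1: "A *v u - b = M *v y1" using uR R_def by auto
    define x1 where "x1 = u - transpose A *v y1"
    define L where "L = range (\<lambda>t. x1 + t *s d)"
    have LS: "(x1 + t *s d, u) \<in> Sset A b" for t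
    proof (rule SsetI)
      have "A *v (x1 + t *s d) = A *v u - M *v y1 + t *s (M *v y0)"
        unfolding x1_def d_def M_def
        by (simp add: matrix_vector_right_distrib matrix_vector_mult_diff_distrib vector_scalar_commute matrix_vector_mul_assoc)
      also have "\<dots> = b" using y1[symmetric] y0(2) by simp
      finally show "A *v (x1 + t *s d) = b" .
      show "u - (x1 + t *s d) = transpose A *v (y1 - t *s y0)"
        unfolding x1_def d_def by (simp add: matrix_vector_mult_diff_distrib vector_scalar_commute)
    qed
    have LF: "L \<subseteq> ED_fiber A b u" unfolding L_def using Sset_fiber[OF LS] by blast
    have inj: "inj (\<lambda>t. x1 + t *s d)"
    proof (rule injI)
      fix s t assume "x1 + s *s d = x1 + t *s d"
      then have "s *s d = t *s d" by simp
      then have "(s - t) *s d = 0" by (simp add: vec.scale_left_diff_distrib)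
      then show "s = t" using dnz by (simp add: vec.scale_eq_0_iff)
    qed
    have infL: "infinite L"
    proof
      assume "finite L"
      then have "finite (UNIV :: complex set)" using inj unfolding L_def by (rule finite_imageD)
      then show False using infinite_UNIV_char_0 by blast
    qed
    have inf: "infinite (ED_fiber A b u)" using infL LF finite_subset by blast
    define Z where "Z i = (if i = 0 then {x1} else zariski_closure coords L)" for i :: nat
    have cl: "zariski_closure coords L \<subseteq> ED_fiber A b u" using closure_sub[OF fiber_zclosed LF] .
    have x1L: "x1 \<in> L" unfolding L_def by (rule range_eqI[of _ _ 0]) simp
    have x1dL: "x1 + d \<in> L" unfolding L_def by (rule range_eqI[of _ _ 1]) simp
    have "\<forall>i\<le>1. zariski_closed coords (Z i) \<and> zariski_irreducible coords (Z i) \<and> Z i \<subseteq> ED_fiber A b u"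
    proof (intro allI impI)
      fix i :: nat assume "i \<le> 1"
      then have "i = 0 \<or> i = 1" by auto
      then show "zariski_closed coords (Z i) \<and> zariski_irreducible coords (Z i) \<and> Z i \<subseteq> ED_fiber A b u"
      proof
        assume "i = 0"
        then show ?thesis unfolding Z_def using point_closed point_irred x1L LF by auto
      next
        assume "i = 1"
        then show ?thesis unfolding Z_def L_def using closed_closure line_irred cl L_def by auto
      qed
    qed
    moreover have "\<forall>i<1. Z i \<subset> Z (Suc i)"
    proof -
      have "{x1} \<subset> zariski_closure coords L"
      proof -
        have "x1 \<in> zariski_closure coords L" "x1 + d \<in> zariski_closure coords L"
          using x1L x1dL sub_closure[of L coords] by blast+
        moreover have "x1 + d \<noteq> x1" using dnz by simp
        ultimately show ?thesis by blast
      qed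
      then show ?thesis unfolding Z_def by simp
    qed
    ultimately have "zdim_ge coords (ED_fiber A b u) 1" unfolding zdim_ge_def by blast
    then show ?thesis using inf by blast
  qed
  have notR: "ED_fiber A b u = {}" if uR: "u \<notin> R" for u
  proof -
    have "\<not> (A *v u - b \<in> range ((*v) M))" using uR R_def by simp
    then obtain w where w: "transpose M *v w = 0" "(\<Sum>i\<in>UNIV. w$i * (A *v u - b)$i) \<noteq> 0"
      using duality[of M "A *v u - b"] by blast
    define T :: "((complex^'m) \<times> (complex^'m)) set" where "T = {z. (\<Sum>i\<in>UNIV. w$i * ((A *v snd z)$i + (- b$i))) = (0::complex)}"
    have Tc: "zariski_closed coords2 T" unfolding T_def by (rule aff_dot_closed)
    have ST: "Sset A b \<subseteq> T"
    proof
      fix z assume "z \<in> Sset A b"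
      then obtain x v where z: "z = (x, v)" "(x, v) \<in> Sset A b" by (metis prod.exhaust)
      obtain y where y: "A *v x = b" "v - x = transpose A *v y" using z(2) by (rule SsetD)
      have "A *v v - b = A *v (v - x)" using y(1) by (simp add: matrix_vector_mult_diff_distrib)
      also have "\<dots> = M *v y" using y(2) unfolding M_def by (simp add: matrix_vector_mul_assoc)
      finally have e: "A *v v - b = M *v y" .
      have "(\<Sum>i\<in>UNIV. w$i * (A *v v - b)$i) = (\<Sum>j\<in>UNIV. (transpose M *v w)$j * y$j)"
        unfolding e by (rule dot_swap)
      also have "\<dots> = 0" using w(1) by simp
      finally show "z \<in> T" unfolding T_def z by simp
    qed
    have "ED_corr A b \<subseteq> T" using corr_sub[OF Tc ST] .
    then show ?thesis using w(2) unfolding ED_fiber_def T_def by auto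
  qed
  have "ED_disc A b = R"
  proof (intro set_eqI iffI)
    fix u assume "u \<in> ED_disc A b"
    then have "ED_fiber A b u \<noteq> {}" unfolding ED_disc_def by auto
    then show "u \<in> R" using notR by blast
  next
    fix u assume "u \<in> R"
    then show "u \<in> ED_disc A b" using inR unfolding ED_disc_def by blast
  qed
  moreover have "ED_disc_inf A b = R"
  proof (intro set_eqI iffI)
    fix u assume "u \<in> ED_disc_inf A b"
    then obtain Z :: "nat \<Rightarrow> (complex^'m) set" where Z: "\<forall>i\<le>1. zariski_closed coords (Z i) \<and> zariski_irreducible coords (Z i) \<and> Z i \<subseteq> ED_fiber A b u"
      unfolding ED_disc_inf_def zdim_ge_def by blast
    have Z0: "zariski_irreducible coords (Z 0)" "Z 0 \<subseteq> ED_fiber A b u" using Z[rule_format, of 0] by simp_all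
    have "Z 0 \<noteq> {}" using Z0(1) unfolding zariski_irreducible_def by simp
    then have "ED_fiber A b u \<noteq> {}" using Z0(2) by blast
    then show "u \<in> R" using notR by blast
  next
    fix u assume "u \<in> R"
    then show "u \<in> ED_disc_inf A b" using inR unfolding ED_disc_inf_def by blast
  qed
  ultimately show ?thesis unfolding R_def M_def by simp
qed



lemma dim_part:
  fixes A :: "complex^'m^'n" and b :: "complex^'n"
  assumes rk: "rank A = CARD('n)"
  shows "vec.dim {v - w | v w. v \<in> {u. A *v u - b \<in> range (\<lambda>y. (A ** transpose A) *v y)}
                          \<and> w \<in> {u. A *v u - b \<in> range (\<lambda>y. (A ** transpose A) *v y)}}
         = CARD('m) - CARD('n) + rank (A ** transpose A)"
proof -
  define M where "M = A ** transpose A"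
  define R where "R = {u. A *v u - b \<in> range (\<lambda>y. M *v y)}"
  define D where "D = {v. A *v v \<in> range (\<lambda>y. M *v y)}"
  obtain w0 where w0: "A *v w0 = b" using A_surj[OF rk] by blast
  have Deq: "{v - w | v w. v \<in> R \<and> w \<in> R} = D"
  proof (intro set_eqI iffI)
    fix z assume "z \<in> {v - w | v w. v \<in> R \<and> w \<in> R}"
    then obtain v w where vw: "z = v - w" "v \<in> R" "w \<in> R" by blast
    obtain y1 y2 where "A *v v - b = M *v y1" "A *v w - b = M *v y2" using vw R_def by auto
    then have "A *v z = M *v (y1 - y2)"
      unfolding vw(1) by (simp add: matrix_vector_mult_diff_distrib algebra_simps)
    then show "z \<in> D" unfolding D_def by auto
  next
    fix z assume "z \<in> D"
    then obtain y where y: "A *v z = M *v y" unfolding D_def by auto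
    have "A *v (z + w0) - b = M *v y" using y w0 by (simp add: matrix_vector_right_distrib)
    then have "z + w0 \<in> R" unfolding R_def by auto
    moreover have e0: "A *v w0 - b = M *v 0" using w0 by simp
    have "w0 \<in> R" unfolding R_def by (intro CollectI) (rule range_eqI[of _ "(*v) M" 0, OF e0])
    moreover have "z = (z + w0) - w0" by simp
    ultimately show "z \<in> {v - w | v w. v \<in> R \<and> w \<in> R}" by blast
  qed
  have sD: "vec.subspace D"
    unfolding vec.subspace_def
  proof (intro conjI ballI allI)
    show "0 \<in> D" unfolding D_def by (auto intro: range_eqI[of _ _ 0])
  next
    fix x y assume "x \<in> D" "y \<in> D"
    then obtain y1 y2 where "A *v x = M *v y1" "A *v y = M *v y2" unfolding D_def by auto
    then have "A *v (x + y) = M *v (y1 + y2)" by (simp add: matrix_vector_right_distrib)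
    then show "x + y \<in> D" unfolding D_def by auto
  next
    fix c :: complex and x assume "x \<in> D"
    then obtain y1 where "A *v x = M *v y1" unfolding D_def by auto
    then have "A *v (c *s x) = M *v (c *s y1)" by (simp add: vector_scalar_commute)
    then show "c *s x \<in> D" unfolding D_def by auto
  qed
  have rn: "vec.dim ((*v) A ` D) + vec.dim {x\<in>D. A *v x = 0} = vec.dim D"
    by (rule rank_nullity_sub[OF matrix_vector_mul_linear_gen sD])
  have img: "(*v) A ` D = range ((*v) M)"
  proof (intro set_eqI iffI)
    fix z assume "z \<in> (*v) A ` D" then show "z \<in> range ((*v) M)" unfolding D_def by auto
  next
    fix z assume "z \<in> range ((*v) M)"
    moreover obtain v where v: "A *v v = z" using A_surj[OF rk] by blast
    ultimately have "v \<in> D" unfolding D_def by auto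
    then show "z \<in> (*v) A ` D" using v by blast
  qed
  have kerD: "{x\<in>D. A *v x = 0} = {x. A *v x = 0}"
    unfolding D_def by (auto intro: range_eqI[of _ _ 0])
  have rA: "range ((*v) A) = UNIV" using A_surj[OF rk] by (metis surj_def)
  have "vec.dim (range ((*v) A)) + vec.dim {x. A *v x = 0} = CARD('m)" by (rule rank_nullity_UNIV)
  then have dk: "vec.dim {x. A *v x = 0} = CARD('m) - CARD('n)" using rA by (simp add: vec_dim_card card_cart_basis)
  have rM: "rank M = vec.dim (range ((*v) M))"
    using rank_range_transpose[of M] M_sym[of A] M_def by simp
  have "vec.dim D = CARD('m) - CARD('n) + rank M" using rn img kerD dk rM by simp
  then show ?thesis using Deq unfolding R_def M_def by simp
qed

theorem mainTheorem6:
  fixes A :: "complex^'m^'n" and b :: "complex^'n"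
  assumes "rank A = CARD('n)" and "CARD('n) \<le> CARD('m)"
  shows "ED_disc A b = ED_disc_inf A b
    \<and> (ED_disc A b \<noteq> {} \<longleftrightarrow> det (A ** transpose A) = 0)
    \<and> (det (A ** transpose A) = 0 \<longrightarrow>
         ED_disc A b = {u. A *v u - b \<in> range (\<lambda>y. (A ** transpose A) *v y)}
       \<and> vec.dim {v - w | v w. v \<in> ED_disc A b \<and> w \<in> ED_disc A b}
           = CARD('m) - CARD('n) + rank (A ** transpose A))"
proof (cases "det (A ** transpose A) = 0")
  case True
  note cz = case_z[OF assms(1) True, of b]
  have ne: "ED_disc A b \<noteq> {}"
  proof -
    obtain w0 where w0: "A *v w0 = b" using A_surj[OF assms(1)] by blast
    have e0: "A *v w0 - b = (A ** transpose A) *v 0" using w0 by simp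
    have "w0 \<in> {u. A *v u - b \<in> range (\<lambda>y. (A ** transpose A) *v y)}"
      by (intro CollectI) (rule range_eqI[of _ "\<lambda>y. (A ** transpose A) *v y" 0, OF e0])
    then show ?thesis using cz by blast
  qed
  show ?thesis using cz ne True dim_part[OF assms(1), of b] by simp
next
  case False
  then show ?thesis using case_nz[OF False, of b] by simp
qed

end
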